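(* Let $|\cdot|$ be a norm on $\mathbb{R}^d$ and let $\mathbf{X}=\{\mathbf{X}_j,j\in\mathbb{Z}\}$ be a strictly stationary, regularly varying $\mathbb{R}^d$-valued time series with tail process $\mathbf{Y}$. Let $u_n>0$ and positive integers $r_n$ satisfy $u_n\to\infty$, $r_n\to\infty$, $nw_n\to\infty$, $r_n/n\to0$, $r_nw_n\to0$, where $w_n=\mathbb{P}(|\mathbf{X}_0|>u_n)$. Let $\gamma\ge0$ and assume $\mathcal{S}^{(\gamma)}(r_n,u_n)$ holds. Let $H\in\mathcal{H}(\gamma)$. Then $$\lim_{L\to\infty}\limsup_{n\to\infty}\frac{\mathbb{E}\big[|H|(u_n^{-1}\mathbf{X}_{1,r_n})\mathbf{1}\{|H|(u_n^{-1}\mathbf{X}_{1,r_n})>L\}\big]}{r_nw_n}=0.$$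
   Context: Tail process: for all $i\le j$ the law of $x^{-1}(\mathbf{X}_i,\dots,\mathbf{X}_j)$ given $|\mathbf{X}_0|>x$ converges weakly to that of $(\mathbf{Y}_i,\dots,\mathbf{Y}_j)$ as $x\to\infty$. Notation: $\mathbf{x}_{i,j}=(\mathbf{x}_i,\dots,\mathbf{x}_j)$; the finite vector $u_n^{-1}\mathbf{X}_{1,r_n}$ is identified with the sequence having these entries at coordinates $1,\dots,r_n$ and $\mathbf{0}$ elsewhere; $\ell_0(\mathbb{R}^d)$ is the set of sequences tending to $0$ at $\pm\infty$. $\mathcal{S}^{(\gamma)}(r_n,u_n)$: for all $s,t>0$, $\lim_{\ell\to\infty}\limsup_{n\to\infty}\frac{1}{w_n}\sum_{i=\ell}^{r_n}i^\gamma\,\mathbb{P}(|\mathbf{X}_0|>u_ns,|\mathbf{X}_i|>u_nt)=0$. For $\mathbf{x}\in\ell_0(\mathbb{R}^d)$: $T_{\min}(\mathbf{x})=\inf\{j:|\mathbf{x}_j|>1\}$, $T_{\max}(\mathbf{x})=\sup\{j:|\mathbf{x}_j|>1\}$, $\mathrm{exc}(\mathbf{x})=\sum_j\mathbf{1}\{|\mathbf{x}_j|>1\}$, cluster length $\mathcal{K}(\mathbf{x})=T_{\max}(\mathbf{x})-T_{\min}(\mathbf{x})+1$ (and $0$ if $\mathrm{exc}(\mathbf{x})=0$). $\mathcal{H}(\gamma)$ is the class of functionals $H:\ell_0(\mathbb{R}^d)\to\mathbb{R}_+$ such that: (i) $H$ is continuous at almost every realization of $\mathbf{Y}$; (ii)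 $H(\mathbf{x})=0$ if $\mathrm{exc}(\mathbf{x})=0$; (iii) if $\mathrm{exc}(\mathbf{x})>0$ then $H(\mathbf{x})=H(\mathbf{x}_{T_{\min}(\mathbf{x}),T_{\max}(\mathbf{x})})$; (iv) there is $C_H>0$ with $H(\mathbf{x})\le C_H[\mathcal{K}(\mathbf{x})]^\gamma$ for all $\mathbf{x}$. *)

theory Defs
  imports "HOL-Probability.Probability"
begin

definition is_norm :: "('v::real_vector \<Rightarrow> real) \<Rightarrow> bool" where
  "is_norm N \<longleftrightarrow> (\<forall>x. N x = 0 \<longleftrightarrow> x = 0) \<and> (\<forall>c x. N (c *\<^sub>R x) = \<bar>c\<bar> * N x)
     \<and> (\<forall>x y. N (x + y) \<le> N x + N y)"

definition l0 :: "('v \<Rightarrow> real) \<Rightarrow> (int \<Rightarrow> 'v) set" where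
  "l0 N = {x. ((\<lambda>j. N (x j)) \<longlongrightarrow> 0) at_top \<and> ((\<lambda>j. N (x j)) \<longlongrightarrow> 0) at_bot}"

definition blk :: "int \<Rightarrow> int \<Rightarrow> (int \<Rightarrow> 'v::zero) \<Rightarrow> (int \<Rightarrow> 'v)" where
  "blk i j x = (\<lambda>k. if i \<le> k \<and> k \<le> j then x k else 0)"

definition exc :: "('v \<Rightarrow> real) \<Rightarrow> (int \<Rightarrow> 'v) \<Rightarrow> nat" where
  "exc N x = card {j. N (x j) > 1}"

definition Tmin :: "('v \<Rightarrow> real) \<Rightarrow> (int \<Rightarrow> 'v) \<Rightarrow> int" where
  "Tmin N x = Inf {j. N (x j) > 1}"

definition Tmax :: "('v \<Rightarrow> real) \<Rightarrow> (int \<Rightarrow> 'v) \<Rightarrow> int" where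
  "Tmax N x = Sup {j. N (x j) > 1}"

definition clen :: "('v \<Rightarrow> real) \<Rightarrow> (int \<Rightarrow> 'v) \<Rightarrow> nat" where
  "clen N x = (if exc N x = 0 then 0 else nat (Tmax N x - Tmin N x + 1))"

definition cont_l0 :: "('v::real_vector \<Rightarrow> real) \<Rightarrow> ((int \<Rightarrow> 'v) \<Rightarrow> real) \<Rightarrow> (int \<Rightarrow> 'v) \<Rightarrow> bool" where
  "cont_l0 N H y \<longleftrightarrow> (\<forall>e>0. \<exists>d>0. \<forall>x\<in>l0 N. (\<forall>j. N (x j - y j) \<le> d) \<longrightarrow> \<bar>H x - H y\<bar> < e)"

definition strictly_stationary :: "'a measure \<Rightarrow> (int \<Rightarrow> 'a \<Rightarrow> 'v::topological_space) \<Rightarrow> bool" where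
  "strictly_stationary M X \<longleftrightarrow> (\<forall>h I. finite I \<longrightarrow>
     distr M (Pi\<^sub>M I (\<lambda>_. borel)) (\<lambda>\<omega>. \<lambda>t\<in>I. X (t + h) \<omega>)
   = distr M (Pi\<^sub>M I (\<lambda>_. borel)) (\<lambda>\<omega>. \<lambda>t\<in>I. X t \<omega>))"

text \<open>Regular variation with tail process Y (Basrak--Segers characterisation):
  Y_0 has a Pareto(alpha) norm and, for all i \<le> j, the law of x^{-1}(X_i,...,X_j) given
  N(X_0) > x converges weakly (tested against all bounded continuous functions) to the
  law of (Y_i,...,Y_j), as x \<rightarrow> \<infinity>.\<close>
definition regvar_tail ::
  "'a measure \<Rightarrow> ('v::real_normed_vector \<Rightarrow> real) \<Rightarrow> (int \<Rightarrow> 'a \<Rightarrow> 'v)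
   \<Rightarrow> 'b measure \<Rightarrow> (int \<Rightarrow> 'b \<Rightarrow> 'v) \<Rightarrow> bool" where
  "regvar_tail M N X P Y \<longleftrightarrow>
     (\<exists>\<alpha>>0. \<forall>y\<ge>1. measure P {\<omega>\<in>space P. N (Y 0 \<omega>) > y} = y powr (-\<alpha>)) \<and>
     (\<forall>x. measure M {\<omega>\<in>space M. N (X 0 \<omega>) > x} > 0) \<and>
     (\<forall>i j. i \<le> j \<longrightarrow>
       (\<forall>f :: (int \<Rightarrow> 'v) \<Rightarrow> real. continuous_on UNIV f \<and> bounded (range f) \<longrightarrow>
         ((\<lambda>x::real. (\<integral>\<omega>. f (blk i j (\<lambda>k. (1 / x) *\<^sub>R X k \<omega>)) *
                          indicator {\<omega>. N (X 0 \<omega>) > x} \<omega> \<partial>M)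
                      / measure M {\<omega>\<in>space M. N (X 0 \<omega>) > x})
          \<longlongrightarrow> (\<integral>\<omega>. f (blk i j (\<lambda>k. Y k \<omega>)) \<partial>P)) at_top))"

definition Hclass ::
  "('v::real_normed_vector \<Rightarrow> real) \<Rightarrow> 'b measure \<Rightarrow> (int \<Rightarrow> 'b \<Rightarrow> 'v) \<Rightarrow> real
   \<Rightarrow> ((int \<Rightarrow> 'v) \<Rightarrow> real) \<Rightarrow> bool" where
  "Hclass N P Y \<gamma> H \<longleftrightarrow>
     (\<forall>x\<in>l0 N. H x \<ge> 0) \<and>
     (AE \<omega> in P. cont_l0 N H (\<lambda>j. Y j \<omega>)) \<and>
     (\<forall>x\<in>l0 N. exc N x = 0 \<longrightarrow> H x = 0) \<and>
     (\<forall>x\<in>l0 N. exc N x > 0 \<longrightarrow> H x = H (blk (Tmin N x) (Tmax N x) x)) \<and>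
     (\<exists>C>0. \<forall>x\<in>l0 N. H x \<le> C * real (clen N x) powr \<gamma>)"

definition cond_S ::
  "'a measure \<Rightarrow> ('v \<Rightarrow> real) \<Rightarrow> (int \<Rightarrow> 'a \<Rightarrow> 'v) \<Rightarrow> real \<Rightarrow> (nat \<Rightarrow> nat) \<Rightarrow> (nat \<Rightarrow> real) \<Rightarrow> bool" where
  "cond_S M N X \<gamma> r u \<longleftrightarrow> (\<forall>s>0. \<forall>t>0.
     ((\<lambda>l::nat. limsup (\<lambda>n. ereal (
        (\<Sum>i\<in>{l..r n}. real i powr \<gamma> *
           measure M {\<omega>\<in>space M. N (X 0 \<omega>) > u n * s \<and> N (X (int i) \<omega>) > u n * t})
        / measure M {\<omega>\<in>space M. N (X 0 \<omega>) > u n})))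
      \<longlonglongrightarrow> 0))"

end

theory Submission
  imports Defs
begin


lemma is_norm_basic:
  assumes "is_norm N"
  shows "N 0 = 0" "N (-x) = N x" "N (x + y) \<le> N x + N y" "N (c *\<^sub>R x) = \<bar>c\<bar> * N x" "N x \<ge> 0"
proof -
  show "N 0 = 0" using assms unfolding is_norm_def by blast
  show nm: "N (-x) = N x" using assms unfolding is_norm_def by (metis abs_neg_one mult_1 scaleR_minus1_left)
  show "N (x + y) \<le> N x + N y" using assms unfolding is_norm_def by blast
  show "N (c *\<^sub>R x) = \<bar>c\<bar> * N x" using assms unfolding is_norm_def by blast
  have "N (x + -x) \<le> N x + N (-x)" using assms unfolding is_norm_def by blast
  then show "N x \<ge> 0" using nm \<open>N 0 = 0\<close> by simp
qed

lemma is_norm_sum: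
  assumes "is_norm N" "finite S"
  shows "N (\<Sum>i\<in>S. f i) \<le> (\<Sum>i\<in>S. N (f i))"
  using assms(2)
proof (induction S rule: finite_induct)
  case empty then show ?case using is_norm_basic[OF assms(1)] by simp
next
  case (insert a S)
  then show ?case using is_norm_basic(3)[OF assms(1), of "f a" "sum f S"] by simp
qed

lemma is_norm_bound:
  fixes N :: "'v::euclidean_space \<Rightarrow> real"
  assumes "is_norm N"
  shows "N x \<le> (\<Sum>b\<in>Basis. N b) * norm x"
proof -
  have "N x = N (\<Sum>b\<in>Basis. (x \<bullet> b) *\<^sub>R b)" by (simp add: euclidean_representation)
  also have "\<dots> \<le> (\<Sum>b\<in>Basis. N ((x \<bullet> b) *\<^sub>R b))" by (rule is_norm_sum[OF assms]) simp
  also have "\<dots> = (\<Sum>b\<in>Basis. \<bar>x \<bullet> b\<bar> * N b)" using is_norm_basic(4)[OF assms] by simp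
  also have "\<dots> \<le> (\<Sum>b\<in>Basis. norm x * N b)"
    by (intro sum_mono mult_right_mono Basis_le_norm is_norm_basic(5)[OF assms]) auto
  finally show ?thesis by (simp add: sum_distrib_left mult.commute)
qed

lemma is_norm_cont:
  fixes N :: "'v::euclidean_space \<Rightarrow> real"
  assumes "is_norm N"
  shows "continuous_on UNIV N"
proof -
  define B where "B = (\<Sum>b\<in>Basis. N b) + 1"
  have B: "B > 0" unfolding B_def using is_norm_basic(5)[OF assms] by (simp add: sum_nonneg add_nonneg_pos)
  have L: "\<bar>N x - N y\<bar> \<le> B * norm (x - y)" for x y
  proof -
    have "N x \<le> N (x - y) + N y" using is_norm_basic(3)[OF assms, of "x - y" y] by simp
    moreover have "N y \<le> N (y - x) + N x" using is_norm_basic(3)[OF assms, of "y - x" x] by simp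
    moreover have "N (y - x) = N (x - y)" using is_norm_basic(2)[OF assms, of "x - y"] by simp
    moreover have "N (x - y) \<le> B * norm (x - y)"
      using is_norm_bound[OF assms, of "x - y"] unfolding B_def by (simp add: distrib_right add_increasing2)
    ultimately show ?thesis by linarith
  qed
  show ?thesis unfolding continuous_on_iff
  proof (intro ballI allI impI)
    fix x and e :: real assume "e > 0"
    show "\<exists>d>0. \<forall>x'\<in>UNIV. dist x' x < d \<longrightarrow> dist (N x') (N x) < e"
    proof (intro exI[of _ "e / B"] conjI ballI impI)
      show "e / B > 0" using B \<open>e>0\<close> by simp
      fix x' assume "dist x' x < e / B"
      then have "B * norm (x' - x) < e" using B by (simp add: dist_norm field_simps)
      then show "dist (N x') (N x) < e" using L[of x' x] by (simp add: dist_real_def)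
    qed
  qed
qed

lemma is_norm_meas:
  fixes N :: "'v::euclidean_space \<Rightarrow> real"
  assumes "is_norm N"
  shows "N \<in> borel_measurable borel"
  using is_norm_cont[OF assms] by (rule borel_measurable_continuous_onI)



lemma stat_pair:
  fixes X :: "int \<Rightarrow> 'a \<Rightarrow> 'v::euclidean_space"
  assumes "is_norm N" "strictly_stationary M X" "\<And>j. X j \<in> borel_measurable M"
  shows "measure M {\<omega>\<in>space M. N (X i \<omega>) > c \<and> N (X (i + k) \<omega>) > c}
       = measure M {\<omega>\<in>space M. N (X 0 \<omega>) > c \<and> N (X k \<omega>) > c}"
proof -
  define I where "I = {0, k}"
  define B where "B = {f\<in>space (Pi\<^sub>M I (\<lambda>_. borel)). N (f 0) > c \<and> N (f k) > c}"
  have Nm: "N \<in> borel_measurable borel" by (rule is_norm_meas[OF assms(1)])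
  have Bs: "B \<in> sets (Pi\<^sub>M I (\<lambda>_. borel))"
  proof -
    have f0: "(\<lambda>f. N (f 0)) \<in> borel_measurable (Pi\<^sub>M I (\<lambda>_. borel))"
      by (rule measurable_compose[OF _ Nm], rule measurable_component_singleton) (simp add: I_def)
    have fk: "(\<lambda>f. N (f k)) \<in> borel_measurable (Pi\<^sub>M I (\<lambda>_. borel))"
      by (rule measurable_compose[OF _ Nm], rule measurable_component_singleton) (simp add: I_def)
    have "B = {f\<in>space (Pi\<^sub>M I (\<lambda>_. borel)). (\<lambda>_. c) f < N (f 0)} \<inter> {f\<in>space (Pi\<^sub>M I (\<lambda>_. borel)). (\<lambda>_. c) f < N (f k)}"
      unfolding B_def by blast
    also have "\<dots> \<in> sets (Pi\<^sub>M I (\<lambda>_. borel))"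
      by (intro sets.Int borel_measurable_less f0 fk measurable_const) auto
    finally show ?thesis .
  qed
  have m1: "(\<lambda>\<omega>. \<lambda>t\<in>I. X (t + i) \<omega>) \<in> measurable M (Pi\<^sub>M I (\<lambda>_. borel))"
    by (intro measurable_restrict assms(3))
  have m2: "(\<lambda>\<omega>. \<lambda>t\<in>I. X t \<omega>) \<in> measurable M (Pi\<^sub>M I (\<lambda>_. borel))"
    by (intro measurable_restrict assms(3))
  have eq: "distr M (Pi\<^sub>M I (\<lambda>_. borel)) (\<lambda>\<omega>. \<lambda>t\<in>I. X (t + i) \<omega>)
          = distr M (Pi\<^sub>M I (\<lambda>_. borel)) (\<lambda>\<omega>. \<lambda>t\<in>I. X t \<omega>)"
    using assms(2) unfolding strictly_stationary_def I_def by auto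
  have p1: "(\<lambda>\<omega>. \<lambda>t\<in>I. X (t + i) \<omega>) -` B \<inter> space M = {\<omega>\<in>space M. N (X i \<omega>) > c \<and> N (X (i + k) \<omega>) > c}"
    unfolding B_def I_def by (auto simp: space_PiM add.commute)
  have p2: "(\<lambda>\<omega>. \<lambda>t\<in>I. X t \<omega>) -` B \<inter> space M = {\<omega>\<in>space M. N (X 0 \<omega>) > c \<and> N (X k \<omega>) > c}"
    unfolding B_def I_def by (auto simp: space_PiM)
  show ?thesis
    using measure_distr[OF m1 Bs] measure_distr[OF m2 Bs] eq p1 p2 by simp
qed



lemma pointwise_bound:
  fixes N :: "'v::euclidean_space \<Rightarrow> real" and x :: "int \<Rightarrow> 'v"
    and H :: "(int \<Rightarrow> 'v) \<Rightarrow> real"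
  assumes nN: "is_norm N"
    and Hnn: "\<forall>z\<in>l0 N. H z \<ge> 0"
    and Hb: "\<forall>z\<in>l0 N. H z \<le> C * real (clen N z) powr \<gamma>"
    and u: "u > 0" and L: "L > 0" and C: "C > 0"
    and lL: "\<And>K::nat. K > 0 \<Longrightarrow> C * real K powr \<gamma> > L \<Longrightarrow> K > l"
  shows "(let h = \<bar>H (blk 1 (int r) (\<lambda>k. (1 / u) *\<^sub>R x k))\<bar> in h * indicator {z. z > L} h)
     \<le> C * (\<Sum>i\<in>{1..r}. \<Sum>k\<in>{l..r}. (real k + 1) powr \<gamma> *
            (if N (x (int i)) > u \<and> N (x (int i + int k)) > u then 1 else 0))"
proof -
  define Z where "Z = blk 1 (int r) (\<lambda>k. (1 / u) *\<^sub>R x k)"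
  note nb = is_norm_basic[OF nN]
  have NZ: "N (Z j) = (if 1 \<le> j \<and> j \<le> int r then N (x j) / u else 0)" for j
    unfolding Z_def blk_def using nb(1) nb(4)[of "1/u"] u by auto
  have E: "{j. N (Z j) > 1} = {j. 1 \<le> j \<and> j \<le> int r \<and> N (x j) > u}"
    using u by (auto simp: NZ field_simps split: if_splits)
  have Zl0: "Z \<in> l0 N"
  proof -
    have "eventually (\<lambda>j. N (Z j) = 0) at_top"
      unfolding eventually_at_top_linorder by (rule exI[of _ "int r + 1"]) (simp add: NZ)
    moreover have "eventually (\<lambda>j. N (Z j) = 0) at_bot"
      unfolding eventually_at_bot_linorder by (rule exI[of _ "0"]) (simp add: NZ)
    ultimately show ?thesis unfolding l0_def
      by (auto intro: tendsto_eventually)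
  qed
  have RHSnn: "0 \<le> C * (\<Sum>i\<in>{1..r}. \<Sum>k\<in>{l..r}. (real k + 1) powr \<gamma> *
            (if N (x (int i)) > u \<and> N (x (int i + int k)) > u then 1 else 0))"
    using C by (intro mult_nonneg_nonneg sum_nonneg) auto
  show ?thesis
  proof (cases "H Z > L")
    case False
    then show ?thesis using RHSnn Hnn Zl0 unfolding Z_def[symmetric] by (simp add: indicator_def)
  next
    case True
    have hb: "H Z \<le> C * real (clen N Z) powr \<gamma>" using Hb Zl0 by blast
    have fin: "finite {j. N (Z j) > 1}" unfolding E by (rule finite_subset[of _ "{1..int r}"]) auto
    have ne: "exc N Z \<noteq> 0"
    proof
      assume "exc N Z = 0"
      then have "clen N Z = 0" unfolding clen_def by simp
      then show False using hb True L by simp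
    qed
    then have ne': "{j. N (Z j) > 1} \<noteq> {}" unfolding exc_def by (metis card.empty)
    define a where "a = Min {j. N (Z j) > 1}"
    define b where "b = Max {j. N (Z j) > 1}"
    have aE: "a \<in> {j. N (Z j) > 1}" unfolding a_def using fin ne' by (rule Min_in)
    have bE: "b \<in> {j. N (Z j) > 1}" unfolding b_def using fin ne' by (rule Max_in)
    have ab: "a \<le> b" unfolding a_def b_def using fin ne' by (simp add: Min_le_iff)
    have cl: "clen N Z = nat (b - a + 1)"
      unfolding clen_def Tmin_def Tmax_def a_def b_def using ne cInf_eq_Min[OF fin ne'] cSup_eq_Max[OF fin ne']
      by simp
    have a1: "1 \<le> a" "a \<le> int r" "N (x a) > u" using aE unfolding E by auto
    have b1: "1 \<le> b" "b \<le> int r" "N (x b) > u" using bE unfolding E by auto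
    define K where "K = nat (b - a + 1)"
    define k where "k = nat (b - a)"
    define i where "i = nat a"
    have Kk: "real K = real k + 1" unfolding K_def k_def using ab by simp
    have "K > 0" unfolding K_def using ab by simp
    moreover have "C * real K powr \<gamma> > L" using hb True cl unfolding K_def by simp
    ultimately have "K > l" by (rule lL)
    then have kl: "k \<in> {l..r}" unfolding K_def k_def using ab a1 b1 by auto
    have ii: "i \<in> {1..r}" unfolding i_def using a1 by auto
    have ev: "N (x (int i)) > u \<and> N (x (int i + int k)) > u"
      unfolding i_def k_def using a1 b1 ab by auto
    let ?g = "\<lambda>i k. (real k + 1) powr \<gamma> *
            (if N (x (int i)) > u \<and> N (x (int i + int k)) > u then 1 else 0)"
    have "H Z \<le> C * ?g i k" using hb cl Kk ev unfolding K_def by simp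
    also have "?g i k \<le> (\<Sum>k\<in>{l..r}. ?g i k)"
      by (rule member_le_sum[OF kl]) auto
    also have "\<dots> \<le> (\<Sum>i\<in>{1..r}. \<Sum>k\<in>{l..r}. ?g i k)"
      by (rule member_le_sum[OF ii, of "\<lambda>i. \<Sum>k\<in>{l..r}. ?g i k"]) (auto intro: sum_nonneg)
    finally have "H Z \<le> C * (\<Sum>i\<in>{1..r}. \<Sum>k\<in>{l..r}. ?g i k)" using C by simp
    then show ?thesis using True L Hnn Zl0 unfolding Z_def[symmetric] by (simp add: indicator_def)
  qed
qed



lemma sets_pair:
  fixes X :: "int \<Rightarrow> 'a \<Rightarrow> 'v::euclidean_space"
  assumes "is_norm N" "\<And>j. X j \<in> borel_measurable M"
  shows "{\<omega>\<in>space M. N (X i \<omega>) > c \<and> N (X j \<omega>) > c} \<in> sets M"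
proof -
  have Nm: "N \<in> borel_measurable borel" by (rule is_norm_meas[OF assms(1)])
  have f: "(\<lambda>\<omega>. N (X i \<omega>)) \<in> borel_measurable M" "(\<lambda>\<omega>. N (X j \<omega>)) \<in> borel_measurable M"
    by (rule measurable_compose[OF assms(2) Nm])+
  have "{\<omega>\<in>space M. N (X i \<omega>) > c \<and> N (X j \<omega>) > c} =
     {\<omega>\<in>space M. (\<lambda>_. c) \<omega> < N (X i \<omega>)} \<inter> {\<omega>\<in>space M. (\<lambda>_. c) \<omega> < N (X j \<omega>)}" by blast
  also have "\<dots> \<in> sets M" by (intro sets.Int borel_measurable_less f measurable_const) auto
  finally show ?thesis .
qed

lemma integral_bound:
  fixes N :: "'v::euclidean_space \<Rightarrow> real" and X :: "int \<Rightarrow> 'a \<Rightarrow> 'v"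
    and H :: "(int \<Rightarrow> 'v) \<Rightarrow> real"
  assumes PM: "prob_space M" and nN: "is_norm N"
    and Xm: "\<And>j. X j \<in> borel_measurable M" and st: "strictly_stationary M X"
    and Hnn: "\<forall>z\<in>l0 N. H z \<ge> 0"
    and Hb: "\<forall>z\<in>l0 N. H z \<le> C * real (clen N z) powr \<gamma>"
    and u: "u > 0" and L: "L > 0" and C: "C > 0" and g0: "\<gamma> \<ge> 0" and l1: "l \<ge> 1"
    and lL: "\<And>K::nat. K > 0 \<Longrightarrow> C * real K powr \<gamma> > L \<Longrightarrow> K > l"
  shows "(\<integral>\<omega>. (let h = \<bar>H (blk 1 (int r) (\<lambda>k. (1 / u) *\<^sub>R X k \<omega>))\<bar> in h * indicator {z. z > L} h) \<partial>M)
     \<le> C * real r * 2 powr \<gamma> * (\<Sum>k\<in>{l..r}. real k powr \<gamma> *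
          measure M {\<omega>\<in>space M. N (X 0 \<omega>) > u \<and> N (X (int k) \<omega>) > u})"
proof -
  interpret prob_space M by (rule PM)
  define f where "f = (\<lambda>\<omega>. (let h = \<bar>H (blk 1 (int r) (\<lambda>k. (1 / u) *\<^sub>R X k \<omega>))\<bar> in h * indicator {z. z > L} h))"
  define A where "A = (\<lambda>i k. {\<omega>\<in>space M. N (X (int i) \<omega>) > u \<and> N (X (int i + int k) \<omega>) > u})"
  define p where "p = (\<lambda>k. measure M {\<omega>\<in>space M. N (X 0 \<omega>) > u \<and> N (X (int k) \<omega>) > u})"
  define g where "g = (\<lambda>\<omega>. C * (\<Sum>i\<in>{1..r}. \<Sum>k\<in>{l..r}. (real k + 1) powr \<gamma> * indicator (A i k) \<omega>))"
  have As: "A i k \<in> sets M" for i k unfolding A_def by (rule sets_pair[OF nN Xm])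
  have fg: "f \<omega> \<le> g \<omega>" if "\<omega> \<in> space M" for \<omega>
  proof -
    have "f \<omega> \<le> C * (\<Sum>i\<in>{1..r}. \<Sum>k\<in>{l..r}. (real k + 1) powr \<gamma> *
            (if N (X (int i) \<omega>) > u \<and> N (X (int i + int k) \<omega>) > u then 1 else 0))"
      unfolding f_def by (rule pointwise_bound[OF nN Hnn Hb u L C lL])
    also have "\<dots> = g \<omega>" unfolding g_def A_def using that
      by (intro arg_cong[where f="\<lambda>s. C * s"] sum.cong refl) (simp add: indicator_def)
    finally show ?thesis .
  qed
  have f0: "0 \<le> f \<omega>" for \<omega> unfolding f_def by (simp add: Let_def indicator_def)
  have ig: "integrable M (\<lambda>\<omega>. (real k + 1) powr \<gamma> * indicator (A i k) \<omega>)" for i k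
    using As by (intro integrable_mult_right integrable_real_indicator) (auto simp: emeasure_finite less_top[symmetric])
  have gi: "integrable M g" unfolding g_def by (intro Bochner_Integration.integrable_mult_right Bochner_Integration.integrable_sum ig)
  have intg: "integral\<^sup>L M g = C * (\<Sum>i\<in>{1..r}. \<Sum>k\<in>{l..r}. (real k + 1) powr \<gamma> * measure M (A i k))"
  proof -
    have ii: "integrable M (\<lambda>\<omega>. \<Sum>k\<in>{l..r}. (real k + 1) powr \<gamma> * indicator (A i k) \<omega>)" for i
      by (intro Bochner_Integration.integrable_sum ig)
    have AA: "A i k \<inter> space M = A i k" for i k using As[of i k] sets.sets_into_space by blast
    show ?thesis unfolding g_def
      by (simp only: integral_mult_right_zero Bochner_Integration.integral_sum[OF ii]
            Bochner_Integration.integral_sum[OF ig] Bochner_Integration.integral_indicator AA)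
  qed
  have Ap: "measure M (A i k) = p k" for i k
    unfolding A_def p_def using stat_pair[OF nN st Xm, of u "int i" "int k"] by simp
  have fint: "integral\<^sup>L M f \<le> integral\<^sup>L M g"
  proof (cases "integrable M f")
    case True then show ?thesis using gi fg by (intro integral_mono) auto
  next
    case False
    have "0 \<le> integral\<^sup>L M g" 
    proof (rule Bochner_Integration.integral_nonneg)
      fix \<omega> assume "\<omega> \<in> space M"
      then show "0 \<le> g \<omega>" using fg[of \<omega>] f0[of \<omega>] by linarith
    qed
    then show ?thesis using False by (simp add: not_integrable_integral_eq)
  qed
  also have "\<dots> = C * real r * (\<Sum>k\<in>{l..r}. (real k + 1) powr \<gamma> * p k)"
    unfolding intg Ap by simp
  also have "\<dots> \<le> C * real r * (\<Sum>k\<in>{l..r}. 2 powr \<gamma> * (real k powr \<gamma> * p k))"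
  proof -
    have "(real k + 1) powr \<gamma> * p k \<le> 2 powr \<gamma> * (real k powr \<gamma> * p k)" if "k \<in> {l..r}" for k
    proof -
      have "real k \<ge> 1" using that l1 by auto
      then have "(real k + 1) powr \<gamma> \<le> (2 * real k) powr \<gamma>" using g0 by (intro powr_mono2) auto
      also have "\<dots> = 2 powr \<gamma> * real k powr \<gamma>" by (simp add: powr_mult)
      finally have "(real k + 1) powr \<gamma> * p k \<le> 2 powr \<gamma> * real k powr \<gamma> * p k"
        unfolding p_def by (intro mult_right_mono measure_nonneg)
      then show ?thesis by (simp add: mult.assoc)
    qed
    then show ?thesis using C by (intro mult_left_mono sum_mono) auto
  qed
  also have "\<dots> = C * real r * 2 powr \<gamma> * (\<Sum>k\<in>{l..r}. real k powr \<gamma> * p k)"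
    by (simp add: sum_distrib_left mult.assoc)
  finally show ?thesis unfolding f_def p_def .
qed



theorem lemma3p7:
  fixes M :: "'a measure" and P :: "'b measure"
    and N :: "real^'d \<Rightarrow> real"
    and X :: "int \<Rightarrow> 'a \<Rightarrow> real^'d" and Y :: "int \<Rightarrow> 'b \<Rightarrow> real^'d"
    and u :: "nat \<Rightarrow> real" and r :: "nat \<Rightarrow> nat" and w :: "nat \<Rightarrow> real"
    and \<gamma> :: real and H :: "(int \<Rightarrow> real^'d) \<Rightarrow> real"
  assumes "prob_space M" and "prob_space P"
    and "is_norm N"
    and "\<And>j. X j \<in> borel_measurable M" and "\<And>j. Y j \<in> borel_measurable P"
    and "strictly_stationary M X"
    and "regvar_tail M N X P Y"
    and "\<And>n. u n > 0" and "\<And>n. r n \<ge> 1"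
    and "filterlim u at_top sequentially" and "filterlim r at_top sequentially"
    and "\<And>n. w n = measure M {\<omega>\<in>space M. N (X 0 \<omega>) > u n}"
    and "filterlim (\<lambda>n. real n * w n) at_top sequentially"
    and "(\<lambda>n. real (r n) / real n) \<longlonglongrightarrow> 0"
    and "(\<lambda>n. real (r n) * w n) \<longlonglongrightarrow> 0"
    and "\<gamma> \<ge> 0"
    and "cond_S M N X \<gamma> r u"
    and "Hclass N P Y \<gamma> H"
  shows "((\<lambda>L::real. limsup (\<lambda>n. ereal (
            (\<integral>\<omega>. (let h = \<bar>H (blk 1 (int (r n)) (\<lambda>k. (1 / u n) *\<^sub>R X k \<omega>))\<bar>
                   in h * indicator {z. z > L} h) \<partial>M)
            / (real (r n) * w n))))
         \<longlongrightarrow> 0) at_top"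
proof -
  note PM = assms(1) and nN = assms(3) and Xm = assms(4) and st = assms(6)
  note upos = assms(8) and r1 = assms(9) and wdef = assms(12) and g0 = assms(16)
  have Hnn: "\<forall>z\<in>l0 N. H z \<ge> 0" using assms(18) unfolding Hclass_def by blast
  obtain C where C: "C > 0" and Hb: "\<forall>z\<in>l0 N. H z \<le> C * real (clen N z) powr \<gamma>"
    using assms(18) unfolding Hclass_def by blast
  have wpos: "w n > 0" for n using assms(7) wdef[of n] unfolding regvar_tail_def by auto
  define l :: "real \<Rightarrow> nat" where
    "l = (\<lambda>L. if \<gamma> = 0 then nat \<lfloor>L\<rfloor> else nat \<lfloor>(L / C) powr (1 / \<gamma>)\<rfloor>)"
  have lL: "K > l L" if LC: "L \<ge> C" and K: "K > 0" and CK: "C * real K powr \<gamma> > L" for L and K :: nat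
  proof (cases "\<gamma> = 0")
    case True
    then show ?thesis using LC K CK by simp
  next
    case False
    then have gp: "\<gamma> > 0" using g0 by simp
    show ?thesis
    proof (rule ccontr)
      assume "\<not> K > l L"
      then have "K \<le> nat \<lfloor>(L / C) powr (1 / \<gamma>)\<rfloor>" using False unfolding l_def by simp
      then have "real K \<le> real (nat \<lfloor>(L / C) powr (1 / \<gamma>)\<rfloor>)" by (rule of_nat_mono)
      also have "\<dots> \<le> (L / C) powr (1 / \<gamma>)" by (simp add: of_nat_floor)
      finally have "real K \<le> (L / C) powr (1 / \<gamma>)" .
      then have "real K powr \<gamma> \<le> ((L / C) powr (1 / \<gamma>)) powr \<gamma>" using g0 by (intro powr_mono2) auto
      also have "\<dots> = L / C" using gp LC C by (simp add: powr_powr)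
      finally show False using CK C by (simp add: field_simps)
    qed
  qed
  have l1: "l L \<ge> 1" if "L \<ge> max C 1" for L
  proof (cases "\<gamma> = 0")
    case True then show ?thesis using that unfolding l_def by (simp add: le_nat_floor)
  next
    case False
    have "L / C \<ge> 1" using that C by simp
    then have "(L / C) powr (1 / \<gamma>) \<ge> 1" using g0 by (intro ge_one_powr_ge_zero) auto
    then show ?thesis using False le_nat_floor[of 1 "(L / C) powr (1 / \<gamma>)"] unfolding l_def by simp
  qed
  have liml: "filterlim l sequentially at_top"
    unfolding filterlim_at_top
  proof
    fix Z :: nat
    show "eventually (\<lambda>L. Z \<le> l L) at_top"
    proof (cases "\<gamma> = 0")
      case True
      show ?thesis unfolding eventually_at_top_linorder
        by (rule exI[of _ "real Z"]) (simp add: True l_def le_nat_floor)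
    next
      case False
      then have gp: "\<gamma> > 0" using g0 by simp
      show ?thesis unfolding eventually_at_top_linorder
      proof (intro exI[of _ "C * real Z powr \<gamma>"] allI impI)
        fix L assume "L \<ge> C * real Z powr \<gamma>"
        then have "L / C \<ge> real Z powr \<gamma>" using C by (simp add: field_simps)
        then have "(L / C) powr (1 / \<gamma>) \<ge> (real Z powr \<gamma>) powr (1 / \<gamma>)" using gp by (intro powr_mono2) auto
        moreover have "(real Z powr \<gamma>) powr (1 / \<gamma>) = real Z"
        proof (cases "Z = 0")
          case True then show ?thesis by simp
        next
          case False then show ?thesis using gp by (simp add: powr_powr)
        qed
        ultimately have "(L / C) powr (1 / \<gamma>) \<ge> real Z" by simp
        then show "Z \<le> l L" using False unfolding l_def by (simp add: le_nat_floor)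
      qed
    qed
  qed
  define T where "T = (\<lambda>k n. ereal ((\<Sum>i\<in>{k..r n}. real i powr \<gamma> *
           measure M {\<omega>\<in>space M. N (X 0 \<omega>) > u n * 1 \<and> N (X (int i) \<omega>) > u n * 1})
        / measure M {\<omega>\<in>space M. N (X 0 \<omega>) > u n}))"
  have Tlim: "(\<lambda>k. limsup (T k)) \<longlonglongrightarrow> 0"
    using assms(17)[unfolded cond_S_def, rule_format, of 1 1] unfolding T_def by simp
  define Q where "Q = (\<lambda>L n. ereal (
            (\<integral>\<omega>. (let h = \<bar>H (blk 1 (int (r n)) (\<lambda>k. (1 / u n) *\<^sub>R X k \<omega>))\<bar>
                   in h * indicator {z. z > L} h) \<partial>M)
            / (real (r n) * w n)))"
  have Qnn: "0 \<le> Q L n" for L n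
  proof -
    have "0 \<le> (\<integral>\<omega>. (let h = \<bar>H (blk 1 (int (r n)) (\<lambda>k. (1 / u n) *\<^sub>R X k \<omega>))\<bar>
                   in h * indicator {z. z > L} h) \<partial>M)"
      by (intro Bochner_Integration.integral_nonneg) (simp add: Let_def indicator_def)
    then show ?thesis unfolding Q_def using wpos[of n] r1[of n] by simp
  qed
  have Qb: "Q L n \<le> ereal (C * 2 powr \<gamma>) * T (l L) n" if L: "L \<ge> max C 1" for L n
  proof -
    have I: "(\<integral>\<omega>. (let h = \<bar>H (blk 1 (int (r n)) (\<lambda>k. (1 / u n) *\<^sub>R X k \<omega>))\<bar>
                   in h * indicator {z. z > L} h) \<partial>M)
     \<le> C * real (r n) * 2 powr \<gamma> * (\<Sum>k\<in>{l L..r n}. real k powr \<gamma> *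
          measure M {\<omega>\<in>space M. N (X 0 \<omega>) > u n \<and> N (X (int k) \<omega>) > u n})"
      using L C by (intro integral_bound[OF PM nN Xm st Hnn Hb upos _ C g0 l1[OF L]] lL) auto
    define S where "S = (\<Sum>k\<in>{l L..r n}. real k powr \<gamma> *
          measure M {\<omega>\<in>space M. N (X 0 \<omega>) > u n \<and> N (X (int k) \<omega>) > u n})"
    have rw: "real (r n) * w n > 0" using wpos[of n] r1[of n] by simp
    have "(\<integral>\<omega>. (let h = \<bar>H (blk 1 (int (r n)) (\<lambda>k. (1 / u n) *\<^sub>R X k \<omega>))\<bar>
                   in h * indicator {z. z > L} h) \<partial>M) / (real (r n) * w n)
       \<le> (C * real (r n) * 2 powr \<gamma> * S) / (real (r n) * w n)"
      using I rw unfolding S_def by (intro divide_right_mono) auto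
    also have "\<dots> = C * 2 powr \<gamma> * (S / w n)" using rw r1[of n] by (simp add: field_simps)
    finally show ?thesis unfolding Q_def T_def S_def using wdef[of n] by simp
  qed
  have up: "limsup (Q L) \<le> ereal (C * 2 powr \<gamma>) * limsup (T (l L))" if "L \<ge> max C 1" for L
  proof -
    have "limsup (Q L) \<le> limsup (\<lambda>n. ereal (C * 2 powr \<gamma>) * T (l L) n)"
      using Qb[OF that] by (intro Limsup_mono) auto
    also have "\<dots> = ereal (C * 2 powr \<gamma>) * limsup (T (l L))"
      using C by (intro limsup_ereal_mult_left) auto
    finally show ?thesis .
  qed
  have lo: "0 \<le> limsup (Q L)" for L
    using Qnn by (intro le_Limsup) auto
  have G: "((\<lambda>L. ereal (C * 2 powr \<gamma>) * limsup (T (l L))) \<longlongrightarrow> ereal (C * 2 powr \<gamma>) * 0) at_top"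
    by (intro tendsto_cmult_ereal filterlim_compose[OF Tlim liml]) auto
  have "((\<lambda>L. limsup (Q L)) \<longlongrightarrow> 0) at_top"
  proof (rule tendsto_sandwich[OF _ _ tendsto_const])
    show "eventually (\<lambda>L. 0 \<le> limsup (Q L)) at_top" using lo by simp
    show "eventually (\<lambda>L. limsup (Q L) \<le> ereal (C * 2 powr \<gamma>) * limsup (T (l L))) at_top"
      unfolding eventually_at_top_linorder using up by blast
    show "((\<lambda>L. ereal (C * 2 powr \<gamma>) * limsup (T (l L))) \<longlongrightarrow> 0) at_top" using G by simp
  qed
  then show ?thesis unfolding Q_def .
qed

end
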